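(* Let $R$ be a unital commutative Hausdorff topological $\mathbb Q$-algebra with dense group of units which is locally $k_\omega$, let $E,F\in\mathrm{TopSMod}^{lko}_R$, let $U\subset E_\infty$ be DeWitt-open and let $f:U\to F_\infty$ be grounded and $\lambda^\infty$-smooth, with associated maps $f^{(k)}$. Then for all $x\in U$ and $y\in E_\infty^+$, $$f(x+y)=\sum_{k=0}^\infty\frac1{k!}\,f^{(k)}(x)(y,\dots,y)$$ (with $k$ arguments $y$ in the $k$-th term; only finitely many terms are nonzero).
   Context: $\lambda^n=R[\theta_1,\dots,\theta_n]$, $\lambda^\infty=R[\theta_i:i\in\mathbb N]$ Grassmann algebras on odd generators ($\lambda^n=\bigoplus_IR\theta_I$ product topology, $\lambda^\infty$ direct limit); $\varepsilon:\lambda\to R$ kills all $\theta_i$, $\lambda^{\infty+}=\ker\varepsilon$. For a Hausdorff graded topological $R$-module $E=E_0\oplus E_1$: $E\otimes\lambda^N=\prod_{|I|\le N}E\theta_I$, $E\otimes\lambda^\infty=\varinjlim E\otimes\lambda^N$ in Top, $E_\infty=(E\otimes\lambda^\infty)_0$, $E_\infty^+=(E\otimes\lambda^{\infty+})_0$, $\underline E(\lambda^\infty\theta_p)=(E\otimes\lambda^\infty\theta_p)_0$. $\mathrm{TopSMod}^{lko}_R$: such $E$ which are locally $k_\omega$ (Hausdorff, every point with an open neighbourhood which is a topological direct limit of an increasing sequence of compact sets). DeWitt topology on $E_\infty$ (resp. $E\otimes\lambda^\infty$): coarsest topology making $\mathrm{id}\otimes\varepsilon$ to $E_0$ (resp.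 $E$) continuous. $U_R=U\cap E_0$; $f$ grounded means $f(U_R)\subset F_0$. $\lambda^\infty$-smooth: $f$ is DeWitt-continuous, $f_R=f|_{U_R}:U_R\to F_0$ is $\mathcal C^\infty$ over $R$ (Bertram–Glöckner–Neeb: $g(x+tv)-g(x)=t\,g^{[1]}(x,v,t)$ with continuous $g^{[1]}$, iterated), and there are DeWitt-continuous maps $f^{(k)}:U\times(E\otimes\lambda^\infty)^k\to F\otimes\lambda^\infty$, $k\ge1$ (and $f^{(0)}=f$), such that: (i) for $x\in U$, $f^{(k)}(x)=f^{(k)}(x,\cdot)$ is even, $\lambda^\infty$-multilinear, supersymmetric ($f^{(k)}(x)(\dots,u,v,\dots)=(-1)^{|u||v|}f^{(k)}(x)(\dots,v,u,\dots)$ for homogeneous $u,v$), and $f^{(k)}(x)(E^k)\subset F$; (ii) $f^{(k)}$ extends $d^kf_R$; (iii) for $k\ge0$, $p\ge1$, $x\in U$, $a\in\underline E(\lambda^\infty\theta_p)$, $v_1,\dots,v_k\in E_\infty$: $f^{(k+1)}(x)(a,v_1,\dots,v_k)=(f^{(k)}(x+a)-f^{(k)}(x))(v_1,\dots,v_k)$. *)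

theory Defs
  imports "HOL-Analysis.Analysis" "HOL-Library.Function_Algebras"
begin

definition kw_space :: "'x::topological_space set \<Rightarrow> bool" where
  "kw_space U \<longleftrightarrow> (\<exists>K::nat \<Rightarrow> 'x set. (\<forall>n. compact (K n)) \<and> incseq K \<and> U = (\<Union>n. K n) \<and>
     (\<forall>A. A \<subseteq> U \<longrightarrow> (openin (top_of_set U) A \<longleftrightarrow> (\<forall>n. openin (top_of_set (K n)) (A \<inter> K n)))))"

text \<open>Locally k-omega (Hausdorffness is imposed separately via the class t2_space).\<close>
definition locally_kw :: "'x::topological_space set \<Rightarrow> bool" where
  "locally_kw S \<longleftrightarrow> (\<forall>x\<in>S. \<exists>U. open U \<and> x \<in> U \<and> kw_space U)"

definition topring :: "'r::{comm_ring_1,topological_space} itself \<Rightarrow> bool" where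
  "topring TYPE('r) \<longleftrightarrow>
     continuous_on UNIV (\<lambda>p::'r\<times>'r. fst p + snd p) \<and>
     continuous_on UNIV (\<lambda>p::'r\<times>'r. fst p * snd p) \<and>
     continuous_on UNIV (uminus :: 'r \<Rightarrow> 'r)"

definition is_unit :: "'r::comm_ring_1 \<Rightarrow> bool" where
  "is_unit t \<longleftrightarrow> (\<exists>u. t * u = 1)"

definition topmod :: "('r::{comm_ring_1,topological_space} \<Rightarrow> 'm::{ab_group_add,topological_space} \<Rightarrow> 'm) \<Rightarrow> bool" where
  "topmod s \<longleftrightarrow> module s \<and>
     continuous_on UNIV (\<lambda>p::'m\<times>'m. fst p + snd p) \<and>
     continuous_on UNIV (uminus :: 'm \<Rightarrow> 'm) \<and>
     continuous_on UNIV (\<lambda>p::'r\<times>'m. s (fst p) (snd p))"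

definition rinv :: "nat \<Rightarrow> 'r::comm_ring_1" where
  "rinv n = (THE u. of_nat n * u = 1)"

text \<open>Points of the iterated domains U^[k] are encoded uniformly as pairs
(E-coordinates, R-coordinates) indexed by nat; level j uses E-coordinates
0..<2^j and R-coordinates 0..<2^j-1, all others zero.  The subspace topology
induced by the product topology is then the product topology of E^(2^j) x R^(2^j-1).\<close>

type_synonym ('e,'r) cpt = "(nat \<Rightarrow> 'e) \<times> (nat \<Rightarrow> 'r)"

definition lev :: "nat \<Rightarrow> ('e::zero,'r::zero) cpt set" where
  "lev j = {P. (\<forall>i\<ge>2^j. fst P i = 0) \<and> (\<forall>i\<ge>2^j - 1. snd P i = 0)}"

definition cscale :: "('r::comm_ring_1 \<Rightarrow> 'e \<Rightarrow> 'e) \<Rightarrow> 'r \<Rightarrow> ('e,'r) cpt \<Rightarrow> ('e,'r) cpt" where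
  "cscale s t P = (\<lambda>i. s t (fst P i), \<lambda>i. t * snd P i)"

text \<open>join j x v t encodes the triple (x,v,t) in E_j x E_j x R as a level (j+1) point.\<close>
definition cjoin :: "nat \<Rightarrow> ('e::zero,'r::zero) cpt \<Rightarrow> ('e,'r) cpt \<Rightarrow> 'r \<Rightarrow> ('e,'r) cpt" where
  "cjoin j x v t =
    (\<lambda>i. if i < 2^j then fst x i else fst v (i - 2^j),
     \<lambda>i. if i < 2^j - 1 then snd x i
         else if i < 2 * (2^j - 1) then snd v (i - (2^j - 1))
         else if i = 2 * (2^j - 1) then t else 0)"

definition cD1 :: "('r::comm_ring_1 \<Rightarrow> 'e::ab_group_add \<Rightarrow> 'e) \<Rightarrow> nat \<Rightarrow> ('e,'r) cpt set \<Rightarrow> ('e,'r) cpt set" where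
  "cD1 s j D = {cjoin j x v t | x v t. x \<in> D \<and> v \<in> lev j \<and> x + cscale s t v \<in> D}"

text \<open>Ck s sc k j D g: g, defined on D \<subseteq> level j, is C^k over R in the sense of BGN.\<close>
fun Ck :: "('r::{comm_ring_1,topological_space} \<Rightarrow> 'e::{ab_group_add,topological_space} \<Rightarrow> 'e) \<Rightarrow>
           ('r \<Rightarrow> 'f::{ab_group_add,topological_space} \<Rightarrow> 'f) \<Rightarrow> nat \<Rightarrow> nat \<Rightarrow> ('e,'r) cpt set \<Rightarrow> (('e,'r) cpt \<Rightarrow> 'f) \<Rightarrow> bool" where
  "Ck s sc 0 j D g = continuous_on D g"
| "Ck s sc (Suc k) j D g = (continuous_on D g \<and>
     (\<exists>g1. Ck s sc k (Suc j) (cD1 s j D) g1 \<and>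
        (\<forall>x v t. x \<in> D \<and> v \<in> lev j \<and> x + cscale s t v \<in> D \<and> is_unit t \<longrightarrow>
            g (x + cscale s t v) - g x = sc t (g1 (cjoin j x v t)))))"

definition cemb0 :: "'e \<Rightarrow> ('e::zero,'r::zero) cpt" where
  "cemb0 e = (\<lambda>i. if i = 0 then e else 0, \<lambda>_. 0)"

definition smooth_R :: "('r::{comm_ring_1,topological_space} \<Rightarrow> 'e::{ab_group_add,topological_space} \<Rightarrow> 'e) \<Rightarrow>
     ('r \<Rightarrow> 'f::{ab_group_add,topological_space} \<Rightarrow> 'f) \<Rightarrow> 'e set \<Rightarrow> ('e \<Rightarrow> 'f) \<Rightarrow> bool" where
  "smooth_R s sc D g \<longleftrightarrow> (\<forall>k. Ck s sc k 0 ((cemb0 :: 'e \<Rightarrow> ('e,'r) cpt) ` D) (\<lambda>P. g (fst P 0)))"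

text \<open>First-order difference quotient witnesses and the derivative dg(x)(v) = g^[1](x,v,0).\<close>
definition dq_dom :: "('r::comm_ring_1 \<Rightarrow> 'e::ab_group_add \<Rightarrow> 'e) \<Rightarrow> 'e set \<Rightarrow> ('e \<times> 'e \<times> 'r) set" where
  "dq_dom s D = {(x, v, t). x \<in> D \<and> x + s t v \<in> D}"

definition dq_witness :: "('r::{comm_ring_1,topological_space} \<Rightarrow> 'e::{ab_group_add,topological_space} \<Rightarrow> 'e) \<Rightarrow>
     ('r \<Rightarrow> 'f::{ab_group_add,topological_space} \<Rightarrow> 'f) \<Rightarrow> 'e set \<Rightarrow> ('e \<Rightarrow> 'f) \<Rightarrow> ('e \<times> 'e \<times> 'r \<Rightarrow> 'f) \<Rightarrow> bool" where
  "dq_witness s sc D g g1 \<longleftrightarrow> continuous_on (dq_dom s D) g1 \<and>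
     (\<forall>x v t. (x, v, t) \<in> dq_dom s D \<and> is_unit t \<longrightarrow> g (x + s t v) - g x = sc t (g1 (x, v, t)))"

definition dfun :: "('r::{comm_ring_1,topological_space} \<Rightarrow> 'e::{ab_group_add,topological_space} \<Rightarrow> 'e) \<Rightarrow>
     ('r \<Rightarrow> 'f::{ab_group_add,topological_space} \<Rightarrow> 'f) \<Rightarrow> 'e set \<Rightarrow> ('e \<Rightarrow> 'f) \<Rightarrow> 'e \<Rightarrow> 'e \<Rightarrow> 'f" where
  "dfun s sc D g x v = (THE w. \<forall>g1. dq_witness s sc D g g1 \<longrightarrow> g1 (x, v, 0) = w)"

text \<open>Higher derivatives d^k g(x)(v_1,...,v_k) (arguments as a list of length k).\<close>
fun dk :: "('r::{comm_ring_1,topological_space} \<Rightarrow> 'e::{ab_group_add,topological_space} \<Rightarrow> 'e) \<Rightarrow>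
     ('r \<Rightarrow> 'f::{ab_group_add,topological_space} \<Rightarrow> 'f) \<Rightarrow> 'e set \<Rightarrow> ('e \<Rightarrow> 'f) \<Rightarrow> nat \<Rightarrow> 'e \<Rightarrow> 'e list \<Rightarrow> 'f" where
  "dk s sc D g 0 x vs = g x"
| "dk s sc D g (Suc k) x vs = dfun s sc D (\<lambda>y. dk s sc D g k y (take k vs)) x (vs ! k)"

text \<open>Elements of \<lambda>^\<infinity> (resp. E \<otimes> \<lambda>^\<infinity>) are coefficient functions I \<mapsto> coefficient of
\<theta>_I, I a finite set of generator indices (generators indexed by nat), supported in
some \<lambda>^N, i.e. on subsets of {..<N}.  E = E0 \<times> E1.\<close>

definition sv_space :: "(nat set \<Rightarrow> 'm::zero) set" where
  "sv_space = {v. \<exists>N. \<forall>I. \<not> I \<subseteq> {..<N} \<longrightarrow> v I = 0}"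

text \<open>Parity p of an element of E \<otimes> \<lambda>: e \<theta>_I has parity |e| + |I|.\<close>
definition sv_par :: "nat \<Rightarrow> (nat set \<Rightarrow> 'a::zero \<times> 'b::zero) \<Rightarrow> bool" where
  "sv_par p v \<longleftrightarrow> (\<forall>I. if even (card I + p) then snd (v I) = 0 else fst (v I) = 0)"

definition lam_par :: "nat \<Rightarrow> (nat set \<Rightarrow> 'r::zero) \<Rightarrow> bool" where
  "lam_par p a \<longleftrightarrow> (\<forall>I. a I \<noteq> 0 \<longrightarrow> card I mod 2 = p mod 2)"

text \<open>E_\<infinity> = (E \<otimes> \<lambda>^\<infinity>)_0\<close>
definition sv_even :: "(nat set \<Rightarrow> 'a::zero \<times> 'b::zero) set" where
  "sv_even = {v \<in> sv_space. sv_par 0 v}"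

definition body :: "(nat set \<Rightarrow> 'm) \<Rightarrow> 'm" where
  "body v = v {}"

definition emb :: "'m::zero \<Rightarrow> (nat set \<Rightarrow> 'm)" where
  "emb e = (\<lambda>I. if I = {} then e else 0)"

text \<open>Sign of \<theta>_J \<theta>_L = (-1)^(gsgn J L) \<theta>_(J \<union> L) for disjoint J, L.\<close>
definition gsgn :: "nat set \<Rightarrow> nat set \<Rightarrow> nat" where
  "gsgn J L = card {(j, l). j \<in> J \<and> l \<in> L \<and> l < j}"

text \<open>Left action of \<lambda>^\<infinity> on E \<otimes> \<lambda>^\<infinity>:  \<theta>_J (e \<theta>_L) = (-1)^(|J||e|) e \<theta>_J \<theta>_L.\<close>
definition lact :: "('r::comm_ring_1 \<Rightarrow> 'a::ab_group_add \<Rightarrow> 'a) \<Rightarrow> ('r \<Rightarrow> 'b::ab_group_add \<Rightarrow> 'b) \<Rightarrow>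
     (nat set \<Rightarrow> 'r) \<Rightarrow> (nat set \<Rightarrow> 'a \<times> 'b) \<Rightarrow> (nat set \<Rightarrow> 'a \<times> 'b)" where
  "lact sa sb a v = (\<lambda>K. \<Sum>J\<in>Pow K.
      (sa ((-1) ^ gsgn J (K - J) * a J) (fst (v (K - J))),
       sb ((-1) ^ gsgn J (K - J) * (-1) ^ card J * a J) (snd (v (K - J)))))"

definition rscale :: "('r \<Rightarrow> 'a \<Rightarrow> 'a) \<Rightarrow> ('r \<Rightarrow> 'b \<Rightarrow> 'b) \<Rightarrow> 'r \<Rightarrow> (nat set \<Rightarrow> 'a \<times> 'b) \<Rightarrow> (nat set \<Rightarrow> 'a \<times> 'b)" where
  "rscale sa sb t v = (\<lambda>I. (sa t (fst (v I)), sb t (snd (v I))))"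

text \<open>Even, \<lambda>^\<infinity>-multilinear, supersymmetric k-linear maps
(E \<otimes> \<lambda>^\<infinity>)^k \<rightarrow> F \<otimes> \<lambda>^\<infinity> mapping E^k into F (arguments as lists of length k).\<close>
definition even_ml_susy ::
  "('r::comm_ring_1 \<Rightarrow> 'a::ab_group_add \<Rightarrow> 'a) \<Rightarrow> ('r \<Rightarrow> 'b::ab_group_add \<Rightarrow> 'b) \<Rightarrow>
   ('r \<Rightarrow> 'c::ab_group_add \<Rightarrow> 'c) \<Rightarrow> ('r \<Rightarrow> 'd::ab_group_add \<Rightarrow> 'd) \<Rightarrow> nat \<Rightarrow>
   ((nat set \<Rightarrow> 'a \<times> 'b) list \<Rightarrow> (nat set \<Rightarrow> 'c \<times> 'd)) \<Rightarrow> bool" where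
  "even_ml_susy sa sb sc sd k m \<longleftrightarrow>
     (\<forall>vs. length vs = k \<and> set vs \<subseteq> sv_space \<longrightarrow> m vs \<in> sv_space) \<and>
     (\<forall>vs i u w. length vs = k \<and> set vs \<subseteq> sv_space \<and> i < k \<and> u \<in> sv_space \<and> w \<in> sv_space \<longrightarrow>
         m (vs[i := u + w]) = m (vs[i := u]) + m (vs[i := w])) \<and>
     (\<forall>vs ps. length vs = k \<and> length ps = k \<and> (\<forall>i<k. vs ! i \<in> sv_space \<and> sv_par (ps ! i) (vs ! i)) \<longrightarrow>
         sv_par (sum_list ps) (m vs)) \<and>
     (\<forall>vs ps i a q. length vs = k \<and> length ps = k \<and> (\<forall>j<k. vs ! j \<in> sv_space \<and> sv_par (ps ! j) (vs ! j)) \<and>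
         i < k \<and> a \<in> sv_space \<and> lam_par q a \<longrightarrow>
         m (vs[i := lact sa sb a (vs ! i)]) =
           lact sc sd (\<lambda>I. (-1) ^ (q * sum_list (take i ps)) * a I) (m vs)) \<and>
     (\<forall>vs ps i. length vs = k \<and> length ps = k \<and> (\<forall>j<k. vs ! j \<in> sv_space \<and> sv_par (ps ! j) (vs ! j)) \<and>
         Suc i < k \<longrightarrow>
         m (vs[i := vs ! Suc i, Suc i := vs ! i]) =
           (if odd (ps ! i) \<and> odd (ps ! Suc i) then - m vs else m vs)) \<and>
     (\<forall>es. length es = k \<longrightarrow> (\<exists>c. m (map emb es) = emb c))"

text \<open>Continuity of g : dom \<rightarrow> Y where dom \<subseteq> X and X, Y carry the initial topologies
of the maps bX, bY (DeWitt topologies).\<close>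
definition dw_cont :: "'x set \<Rightarrow> ('x \<Rightarrow> 'p::topological_space) \<Rightarrow> ('y \<Rightarrow> 'q::topological_space) \<Rightarrow> ('x \<Rightarrow> 'y) \<Rightarrow> bool" where
  "dw_cont D bX bY g \<longleftrightarrow> (\<forall>V. open V \<longrightarrow> (\<exists>W. open W \<and> {z \<in> D. bY (g z) \<in> V} = {z \<in> D. bX z \<in> W}))"

definition dw_open :: "(nat set \<Rightarrow> 'a::{zero,topological_space} \<times> 'b::zero) set \<Rightarrow> bool" where
  "dw_open U \<longleftrightarrow> (\<exists>W. open W \<and> U = {x \<in> sv_even. fst (body x) \<in> W})"

end

theory Submission
  imports Defs
begin

lemma rscale_add_right:
  assumes "module sc" "module sd"
  shows "rscale sc sd c (u + v) = rscale sc sd c u + rscale sc sd c v"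
  using module.scale_right_distrib[OF assms(1)] module.scale_right_distrib[OF assms(2)]
  by (simp add: rscale_def fun_eq_iff zero_prod_def)

lemma rscale_add_left:
  assumes "module sc" "module sd"
  shows "rscale sc sd (s + t) w = rscale sc sd s w + rscale sc sd t w"
  using module.scale_left_distrib[OF assms(1)] module.scale_left_distrib[OF assms(2)]
  by (simp add: rscale_def fun_eq_iff zero_prod_def)

lemma rscale_scale:
  assumes "module sc" "module sd"
  shows "rscale sc sd s (rscale sc sd t w) = rscale sc sd (s * t) w"
  using module.scale_scale[OF assms(1)] module.scale_scale[OF assms(2)]
  by (simp add: rscale_def fun_eq_iff zero_prod_def)

lemma rscale_one:
  assumes "module sc" "module sd"
  shows "rscale sc sd 1 w = w"
  using module.scale_one[OF assms(1)] module.scale_one[OF assms(2)]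
  by (simp add: rscale_def fun_eq_iff zero_prod_def)

lemma rscale_zero_left:
  assumes "module sc" "module sd"
  shows "rscale sc sd 0 w = 0"
  using module.scale_zero_left[OF assms(1)] module.scale_zero_left[OF assms(2)]
  by (simp add: rscale_def fun_eq_iff zero_prod_def)

lemma rscale_zero_right:
  assumes "module sc" "module sd"
  shows "rscale sc sd c 0 = 0"
  using module.scale_zero_right[OF assms(1)] module.scale_zero_right[OF assms(2)]
  by (simp add: rscale_def fun_eq_iff zero_prod_def)

lemma rscale_sum_right:
  assumes "module sc" "module sd"
  shows "rscale sc sd c (\<Sum>i\<in>A. f i) = (\<Sum>i\<in>A. rscale sc sd c (f i))"
proof (cases "finite A")
  case True then show ?thesis
  proof (induction A rule: finite_induct)
    case empty then show ?case
      by (simp add: rscale_def fun_eq_iff module.scale_zero_right[OF assms(1)] module.scale_zero_right[OF assms(2)] zero_prod_def)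
  next
    case (insert x F)
    have "rscale sc sd c (sum f (insert x F)) = rscale sc sd c (f x + sum f F)"
      using insert(1,2) by simp
    also have "\<dots> = rscale sc sd c (f x) + rscale sc sd c (sum f F)" by (rule rscale_add_right[OF assms])
    finally show ?case using insert(1,2,3) by (metis sum.insert)
  qed
next
  case False then show ?thesis by (simp add: rscale_zero_right[OF assms])
qed

lemma sv_even_add:
  fixes v w :: "nat set \<Rightarrow> 'a::ab_group_add \<times> 'b::ab_group_add"
  assumes "v \<in> sv_even" "w \<in> sv_even"
  shows "v + w \<in> sv_even"
proof -
  from assms obtain N M where N: "\<forall>I. \<not> I \<subseteq> {..<N} \<longrightarrow> v I = 0" and M: "\<forall>I. \<not> I \<subseteq> {..<M} \<longrightarrow> w I = 0"
    by (auto simp: sv_even_def sv_space_def)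
  have "\<forall>I. \<not> I \<subseteq> {..<max N M} \<longrightarrow> (v + w) I = 0"
    proof (intro allI impI)
    fix I assume "\<not> I \<subseteq> {..<max N M}"
    then have "\<not> I \<subseteq> {..<N}" "\<not> I \<subseteq> {..<M}" by auto
    then show "(v + w) I = 0" using N M by (simp add: plus_fun_def)
  qed
  moreover have "sv_par 0 (v + w)" using assms by (auto simp: sv_even_def sv_par_def)
  ultimately show ?thesis by (auto simp: sv_even_def sv_space_def)
qed

lemma sv_even_restrict:
  assumes "y \<in> sv_even"
  shows "(\<lambda>I. if P I then y I else 0) \<in> sv_even"
  using assms by (auto simp: sv_even_def sv_space_def sv_par_def)

lemma sv_even_zero: "0 \<in> sv_even"
  by (auto simp: sv_even_def sv_space_def sv_par_def)

lemma zp: "(0,0) = (0::'a::zero \<times> 'b::zero)" by (simp add: zero_prod_def)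

definition theta :: "nat \<Rightarrow> nat set \<Rightarrow> 'r::comm_ring_1" where
  "theta p = (\<lambda>I. if I = {p} then 1 else 0)"

lemma lact_theta:
  assumes "module sa" "module sb"
  shows "lact sa sb (theta p) w K = (if finite K \<and> p \<in> K then
     (sa ((-1)^gsgn {p} (K-{p})) (fst (w (K-{p}))), sb ((-1)^gsgn {p} (K-{p}) * (-1)) (snd (w (K-{p})))) else 0)"
proof (cases "finite K")
  case False
  then have "infinite (Pow K)" by simp
  then show ?thesis using False by (simp add: lact_def)
next
  case True
  have eq: "\<And>J. (sa ((-1) ^ gsgn J (K - J) * theta p J) (fst (w (K - J))),
       sb ((-1) ^ gsgn J (K - J) * (-1) ^ card J * theta p J) (snd (w (K - J))))
      = (if J = {p} then (sa ((-1)^gsgn {p} (K-{p})) (fst (w (K-{p}))), sb ((-1)^gsgn {p} (K-{p}) * (-1)) (snd (w (K-{p})))) else 0)"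
    by (cases "J = {p}") (simp_all add: theta_def module.scale_zero_left[OF assms(1)] module.scale_zero_left[OF assms(2)] zero_prod_def)
  have "lact sa sb (theta p) w K = (\<Sum>J\<in>Pow K. (if J = {p} then (sa ((-1)^gsgn {p} (K-{p})) (fst (w (K-{p}))), sb ((-1)^gsgn {p} (K-{p}) * (-1)) (snd (w (K-{p})))) else 0))"
    unfolding lact_def using eq by (intro sum.cong) auto
  also have "\<dots> = (if p \<in> K then (sa ((-1)^gsgn {p} (K-{p})) (fst (w (K-{p}))), sb ((-1)^gsgn {p} (K-{p}) * (-1)) (snd (w (K-{p})))) else 0)"
    using True by (simp add: sum.delta)
  finally show ?thesis using True by simp
qed


lemma theta_sv: "theta p \<in> sv_space"
  unfolding sv_space_def theta_def by (rule CollectI, rule exI[of _ "Suc p"]) auto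

lemma theta_par: "lam_par 1 (theta p)"
  unfolding lam_par_def theta_def by auto

lemma lact_theta_twice:
  assumes "module sa" "module sb"
  shows "lact sa sb (theta p) (lact sa sb (theta p) w) = 0"
proof
  fix K
  show "lact sa sb (theta p) (lact sa sb (theta p) w) K = 0 K"
    using module.scale_zero_right[OF assms(1)] module.scale_zero_right[OF assms(2)]
    by (simp add: lact_theta[OF assms] zero_prod_def)
qed

lemma sign_sq: "((-1::'r::comm_ring_1) ^ g) * (-1) ^ g = 1"
  by (simp add: power_add[symmetric])

lemma sign_sq2: "((-1::'r::comm_ring_1) ^ g * -1) * ((-1) ^ g * -1) = 1"
  using sign_sq[of g] by simp



definition pfb :: "('r::comm_ring_1 \<Rightarrow> 'a::ab_group_add \<Rightarrow> 'a) \<Rightarrow> ('r \<Rightarrow> 'b::ab_group_add \<Rightarrow> 'b) \<Rightarrow> nat \<Rightarrow> (nat set \<Rightarrow> 'a \<times> 'b) \<Rightarrow> nat set \<Rightarrow> 'a \<times> 'b" where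
  "pfb sa sb p a = (\<lambda>I. if p \<notin> I then (sa ((-1::'r)^gsgn {p} I) (fst (a (insert p I))),
       sb ((-1)^gsgn {p} I * (-1)) (snd (a (insert p I)))) else 0)"

lemma pfb_zero:
  assumes ms: "module sa" "module sb" and "a (insert p I) = 0"
  shows "pfb sa sb p a I = 0"
  using assms module.scale_zero_right[OF ms(1)] module.scale_zero_right[OF ms(2)]
  unfolding pfb_def by (simp add: zero_prod_def)

lemma pfb_sv:
  assumes ms: "module sa" "module sb" and a: "a \<in> sv_space"
  shows "pfb sa sb p a \<in> sv_space"
proof -
  from a have "\<exists>N. \<forall>I. \<not> I \<subseteq> {..<N} \<longrightarrow> a I = 0" by (simp add: sv_space_def)
  then obtain N where N0: "\<forall>I. \<not> I \<subseteq> {..<N} \<longrightarrow> a I = 0" ..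
  note N = N0[rule_format]
  have "\<forall>I. \<not> I \<subseteq> {..<N} \<longrightarrow> pfb sa sb p a I = 0"
  proof (intro allI impI)
    fix I assume "\<not> I \<subseteq> {..<N}"
    then have "\<not> insert p I \<subseteq> {..<N}" by auto
    then show "pfb sa sb p a I = 0" by (intro pfb_zero[OF ms] N)
  qed
  then show ?thesis unfolding sv_space_def by (intro CollectI exI)
qed

lemma pfb_par:
  assumes ms: "module sa" "module sb" and a: "a \<in> sv_even"
  shows "sv_par 1 (pfb sa sb p a)"
  unfolding sv_par_def
proof
  from a have "\<exists>N. \<forall>I. \<not> I \<subseteq> {..<N} \<longrightarrow> a I = 0" and par: "sv_par 0 a" by (simp_all add: sv_even_def sv_space_def)
  then obtain N where N0: "\<forall>I. \<not> I \<subseteq> {..<N} \<longrightarrow> a I = 0" by blast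
  note N = N0[rule_format]
  note z = module.scale_zero_right[OF ms(1)] module.scale_zero_right[OF ms(2)]
  fix I
  show "if even (card I + 1) then snd (pfb sa sb p a I) = 0 else fst (pfb sa sb p a I) = 0"
  proof (cases "p \<in> I")
    case True then show ?thesis by (simp add: pfb_def)
  next
    case False
    show ?thesis
    proof (cases "finite I")
      case True
      then have c: "card (insert p I) = card I + 1" using False by simp
      have pp: "if even (card (insert p I) + 0) then snd (a (insert p I)) = 0 else fst (a (insert p I)) = 0"
        using par unfolding sv_par_def by (rule spec)
      show ?thesis
      proof (cases "even (card I + 1)")
        case True
        then have "snd (a (insert p I)) = 0" using pp c by simp
        then show ?thesis using True False z by (simp add: pfb_def)
      next
        case F: False
        then have "fst (a (insert p I)) = 0" using pp c by simp
        then show ?thesis using F False z by (simp add: pfb_def)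
      qed
    next
      case fin: False
      have "\<not> insert p I \<subseteq> {..<N}"
      proof
        assume "insert p I \<subseteq> {..<N}"
        then have "finite (insert p I)" by (rule finite_subset) simp
        then show False using fin by simp
      qed
      then have "pfb sa sb p a I = 0" by (rule pfb_zero[OF ms N])
      then show ?thesis by simp
    qed
  qed
qed

lemma pfb_lact:
  assumes ms: "module sa" "module sb" and a: "a \<in> sv_space" and ap: "\<forall>I. p \<notin> I \<longrightarrow> a I = 0"
  shows "lact sa sb (theta p) (pfb sa sb p a) = a"
proof
  from a have "\<exists>N. \<forall>I. \<not> I \<subseteq> {..<N} \<longrightarrow> a I = 0" by (simp add: sv_space_def)
  then obtain N where N0: "\<forall>I. \<not> I \<subseteq> {..<N} \<longrightarrow> a I = 0" by blast
  fix K
  show "lact sa sb (theta p) (pfb sa sb p a) K = a K"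
  proof (cases "finite K \<and> p \<in> K")
    case True
    then have i: "insert p (K - {p}) = K" by auto
    have np: "p \<notin> K - {p}" by simp
    define g where "g = gsgn {p} (K - {p})"
    have "lact sa sb (theta p) (pfb sa sb p a) K =
      (sa ((-1)^g) (sa ((-1)^g) (fst (a K))), sb ((-1)^g * (-1)) (sb ((-1)^g * (-1)) (snd (a K))))"
      using True np unfolding lact_theta[OF ms] pfb_def g_def i by simp
    also have "\<dots> = a K"
      unfolding module.scale_scale[OF ms(1)] module.scale_scale[OF ms(2)] sign_sq sign_sq2
        module.scale_one[OF ms(1)] module.scale_one[OF ms(2)] by simp
    finally show ?thesis .
  next
    case False
    have "a K = 0"
    proof (cases "finite K")
      case fin: False
      have "\<not> K \<subseteq> {..<N}"
      proof
        assume "K \<subseteq> {..<N}"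
        then have "finite K" by (rule finite_subset) simp
        then show False using fin by simp
      qed
      then show ?thesis using N0 by simp
    next
      case True then have "p \<notin> K" using False by simp
      then show ?thesis using ap by simp
    qed
    then show ?thesis by (simp only: lact_theta[OF ms] if_not_P[OF False])
  qed
qed

lemma piece_factor:
  assumes ms: "module sa" "module sb" and a: "a \<in> sv_even" and ap: "\<forall>I. p \<notin> I \<longrightarrow> a I = 0"
  shows "\<exists>b. b \<in> sv_space \<and> sv_par 1 b \<and> lact sa sb (theta p) b = a"
proof -
  have "a \<in> sv_space" using a by (simp add: sv_even_def)
  then show ?thesis using pfb_sv[OF ms] pfb_par[OF ms a] pfb_lact[OF ms _ ap] by blast
qed

lemma ml_add:
  assumes "even_ml_susy sa sb sc sd k m" "length vs = k" "set vs \<subseteq> sv_space" "i < k" "u \<in> sv_space" "w \<in> sv_space"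
  shows "m (vs[i := u + w]) = m (vs[i := u]) + m (vs[i := w])"
  using assms unfolding even_ml_susy_def by blast

lemma ml_swap:
  assumes E: "even_ml_susy sa sb sc sd k m" and l: "length vs = k" and s: "set vs \<subseteq> sv_even" and i: "Suc i < k"
  shows "m (vs[i := vs ! Suc i, Suc i := vs ! i]) = m vs"
proof -
  have h: "\<forall>j<k. vs ! j \<in> sv_space \<and> sv_par (replicate k 0 ! j) (vs ! j)"
    using s l by (auto simp: sv_even_def dest!: nth_mem)
  have "\<forall>vs ps i. length vs = k \<and> length ps = k \<and> (\<forall>j<k. vs ! j \<in> sv_space \<and> sv_par (ps ! j) (vs ! j)) \<and>
         Suc i < k \<longrightarrow>
         m (vs[i := vs ! Suc i, Suc i := vs ! i]) =
           (if odd (ps ! i) \<and> odd (ps ! Suc i) then - m vs else m vs)"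
    using E unfolding even_ml_susy_def by blast
  from this[rule_format, of vs "replicate k 0" i] show ?thesis using h l i by simp
qed

lemma ml_pull:
  assumes E: "even_ml_susy sa sb sc sd k m"
    and "length vs = k" "length ps = k" "\<forall>j<k. vs ! j \<in> sv_space \<and> sv_par (ps ! j) (vs ! j)"
    "i < k" "a \<in> sv_space" "lam_par q a"
  shows "m (vs[i := lact sa sb a (vs ! i)]) = lact sc sd (\<lambda>I. (-1) ^ (q * sum_list (take i ps)) * a I) (m vs)"
proof -
  have "\<forall>vs ps i a q. length vs = k \<and> length ps = k \<and> (\<forall>j<k. vs ! j \<in> sv_space \<and> sv_par (ps ! j) (vs ! j)) \<and>
         i < k \<and> a \<in> sv_space \<and> lam_par q a \<longrightarrow>
         m (vs[i := lact sa sb a (vs ! i)]) =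
           lact sc sd (\<lambda>I. (-1) ^ (q * sum_list (take i ps)) * a I) (m vs)"
    using E unfolding even_ml_susy_def by blast
  then show ?thesis using assms(2-) by blast
qed

lemma ml_double:
  assumes ms: "module sa" "module sb" "module sc" "module sd"
    and E: "even_ml_susy sa sb sc sd k m" and l: "length vs = k" and s: "set vs \<subseteq> sv_even" and i: "Suc i < k"
    and a: "a \<in> sv_even" and ap: "\<forall>I. p \<notin> I \<longrightarrow> a I = 0"
    and va: "vs ! i = a" "vs ! Suc i = a"
  shows "m vs = 0"
proof -
  obtain b where b: "b \<in> sv_space" "sv_par 1 b" "lact sa sb (theta p) b = a"
    using piece_factor[OF ms(1,2) a ap] by blast
  have evsp: "\<And>j. j < k \<Longrightarrow> vs ! j \<in> sv_space \<and> sv_par 0 (vs ! j)"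
    using s l by (auto simp: sv_even_def dest!: nth_mem)
  define V1 where "V1 = vs[Suc i := b]"
  define ps1 where "ps1 = (replicate k (0::nat))[Suc i := 1]"
  have h1: "\<forall>j<k. V1 ! j \<in> sv_space \<and> sv_par (ps1 ! j) (V1 ! j)"
    using evsp b l i by (auto simp: V1_def ps1_def nth_list_update)
  have "m (V1[Suc i := lact sa sb (theta p) (V1 ! Suc i)]) =
      lact sc sd (\<lambda>I. (-1) ^ (1 * sum_list (take (Suc i) ps1)) * theta p I) (m V1)"
    by (rule ml_pull[OF E _ _ h1 i theta_sv theta_par]) (use l in \<open>simp_all add: V1_def ps1_def\<close>)
  moreover have "V1[Suc i := lact sa sb (theta p) (V1 ! Suc i)] = vs"
    using b(3) va l i by (simp add: V1_def list_update_same_conv)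
  moreover have "take (Suc i) ps1 = replicate (Suc i) 0"
    using i by (simp add: ps1_def take_update_cancel)
  ultimately have 1: "m vs = lact sc sd (theta p) (m V1)" by (simp add: sum_list_replicate)
  define V2 where "V2 = V1[i := b]"
  define ps2 where "ps2 = ps1[i := 1]"
  have h2: "\<forall>j<k. V2 ! j \<in> sv_space \<and> sv_par (ps2 ! j) (V2 ! j)"
    using h1 b l i by (auto simp: V2_def ps2_def nth_list_update V1_def ps1_def)
  have "m (V2[i := lact sa sb (theta p) (V2 ! i)]) =
      lact sc sd (\<lambda>I. (-1) ^ (1 * sum_list (take i ps2)) * theta p I) (m V2)"
    by (rule ml_pull[OF E _ _ h2 _ theta_sv theta_par]) (use l i in \<open>simp_all add: V2_def V1_def ps2_def ps1_def\<close>)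
  moreover have "V2[i := lact sa sb (theta p) (V2 ! i)] = V1"
  proof -
    have "vs[i := a] = vs" using va(1) by (metis list_update_id)
    then show ?thesis using b(3) va l i by (simp add: V2_def V1_def list_update_swap)
  qed
  moreover have "take i ps2 = replicate i 0"
    using i by (simp add: ps2_def ps1_def take_update_cancel)
  ultimately have 2: "m V1 = lact sc sd (theta p) (m V2)" by (simp add: sum_list_replicate)
  show ?thesis using 1 2 lact_theta_twice[OF ms(3,4)] by simp
qed

lemma ml_zero:
  assumes E: "even_ml_susy sa sb sc sd k m" and l: "length vs = k" and s: "set vs \<subseteq> sv_space" and i: "i < k"
    and v0: "vs ! i = 0"
  shows "m vs = 0"
proof -
  have z: "vs ! i \<in> sv_space" using s l i by (auto dest!: nth_mem)
  have "m (vs[i := vs ! i + vs ! i]) = m (vs[i := vs ! i]) + m (vs[i := vs ! i])"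
    by (rule ml_add[OF E l s i z z])
  moreover have "vs[i := 0] = vs" using v0 by (metis list_update_id)
  ultimately show ?thesis using v0 by simp
qed

lemma sv_even_sv: "set vs \<subseteq> sv_even \<Longrightarrow> set vs \<subseteq> sv_space"
  by (auto simp: sv_even_def)

lemma ml_binom:
  fixes z a :: "nat set \<Rightarrow> 'a::ab_group_add \<times> 'b::ab_group_add"
  assumes ms: "module sa" "module sb" "module sc" "module sd"
    and E: "even_ml_susy sa sb sc sd K m"
    and z: "z \<in> sv_even" and a: "a \<in> sv_even" and ap: "\<forall>I. p \<notin> I \<longrightarrow> a I = 0"
  shows "\<forall>vs. length vs + j = K \<and> set vs \<subseteq> sv_even \<longrightarrow>
     m (replicate j (z + a) @ vs) = m (replicate j z @ vs) + rscale sc sd (of_nat j) (m (replicate (j - 1) z @ a # vs))"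
proof (induction j)
  case 0
  then show ?case by (simp add: rscale_zero_left[OF ms(3,4)])
next
  case (Suc j)
  show ?case
  proof (intro allI impI, elim conjE)
    fix vs :: "(nat set \<Rightarrow> 'a \<times> 'b) list"
    assume l: "length vs + Suc j = K" and s: "set vs \<subseteq> sv_even"
    have za: "z + a \<in> sv_even" using sv_even_add[OF z a] .
    have zs: "z \<in> sv_space" "a \<in> sv_space" using z a by (auto simp: sv_even_def)
    have IH: "m (replicate j (z + a) @ (z + a) # vs) = m (replicate j z @ (z + a) # vs)
        + rscale sc sd (of_nat j) (m (replicate (j - 1) z @ a # (z + a) # vs))"
      by (rule Suc.IH[rule_format]) (use l s za in auto)
    define L where "L = replicate j z @ z # vs"
    have Ll: "length L = K" using l by (simp add: L_def)
    have Ls: "set L \<subseteq> sv_space" using s z by (auto simp: L_def sv_even_def)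
    have A: "m (replicate j z @ (z + a) # vs) = m (replicate (Suc j) z @ vs) + m (replicate j z @ a # vs)"
    proof -
      have "m (L[j := z + a]) = m (L[j := z]) + m (L[j := a])"
        by (rule ml_add[OF E Ll Ls _ zs]) (use l in simp)
      moreover have e: "\<And>u. L[j := u] = replicate j z @ u # vs"
        unfolding L_def by (metis length_replicate list_update_length)
      moreover have r: "replicate j z @ z # vs = replicate (Suc j) z @ vs"
        by (simp add: replicate_app_Cons_same)
      ultimately show ?thesis by (simp only: e r)
    qed
    have B: "rscale sc sd (of_nat j) (m (replicate (j - 1) z @ a # (z + a) # vs))
        = rscale sc sd (of_nat j) (m (replicate j z @ a # vs))"
    proof (cases j)
      case 0 then show ?thesis by (simp add: rscale_zero_left[OF ms(3,4)])
    next
      case (Suc j')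
      define L' where "L' = replicate j' z @ a # z # vs"
      have L'l: "length L' = K" using l Suc by (simp add: L'_def)
      have L's: "set L' \<subseteq> sv_space" using s z a by (auto simp: L'_def sv_even_def)
      have "m (L'[Suc j' := z + a]) = m (L'[Suc j' := z]) + m (L'[Suc j' := a])"
        by (rule ml_add[OF E L'l L's _ zs]) (use l Suc in simp)
      moreover have "m (L'[Suc j' := a]) = 0"
        by (rule ml_double[OF ms E _ _ _ a ap, of _ j']) (use l Suc s z a in \<open>auto simp: L'_def nth_append list_update_append\<close>)
      moreover have "m (L'[Suc j' := z]) = m (replicate j z @ a # vs)"
      proof -
        define L2 where "L2 = replicate j' z @ z # a # vs"
        have "m (L2[j' := L2 ! Suc j', Suc j' := L2 ! j']) = m L2"
          by (rule ml_swap[OF E]) (use l Suc s z a in \<open>auto simp: L2_def\<close>)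
        moreover have n1: "L2 ! j' = z" "L2 ! Suc j' = a"
          by (simp_all add: L2_def nth_append del: replicate_app_Cons_same)
        moreover have u: "L2[j' := a, Suc j' := z] = L'"
          by (simp add: L2_def L'_def list_update_append del: replicate_app_Cons_same)
        moreover have L'z: "L'[Suc j' := z] = L'"
          by (simp add: L'_def list_update_append del: replicate_app_Cons_same)
        moreover have L2r: "L2 = replicate j z @ a # vs" using Suc by (simp add: L2_def replicate_append_same)
        ultimately show ?thesis by simp
      qed
      ultimately show ?thesis using Suc by (simp add: L'_def list_update_append)
    qed
    have C: "m (replicate j z @ a # vs) + rscale sc sd (of_nat j) (m (replicate j z @ a # vs))
        = rscale sc sd (of_nat (Suc j)) (m (replicate j z @ a # vs))"
      by (simp add: rscale_add_left[OF ms(3,4)] rscale_one[OF ms(3,4)])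
    have "m (replicate (Suc j) (z + a) @ vs) = m (replicate j (z + a) @ (z + a) # vs)"
      by (simp add: replicate_app_Cons_same)
    also have "\<dots> = m (replicate (Suc j) z @ vs) + rscale sc sd (of_nat (Suc j)) (m (replicate j z @ a # vs))"
      using IH A B C by (simp add: add.assoc)
    finally show "m (replicate (Suc j) (z + a) @ vs) = m (replicate (Suc j) z @ vs) +
        rscale sc sd (of_nat (Suc j)) (m (replicate (Suc j - 1) z @ a # vs))" by simp
  qed
qed



theorem proposition4p5:
  fixes sa :: "'r::{comm_ring_1,t2_space} \<Rightarrow> 'a::{ab_group_add,t2_space} \<Rightarrow> 'a"
    and sb :: "'r \<Rightarrow> 'b::{ab_group_add,t2_space} \<Rightarrow> 'b"
    and sc :: "'r \<Rightarrow> 'c::{ab_group_add,t2_space} \<Rightarrow> 'c"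
    and sd :: "'r \<Rightarrow> 'd::{ab_group_add,t2_space} \<Rightarrow> 'd"
    and U :: "(nat set \<Rightarrow> 'a \<times> 'b) set"
    and f :: "(nat set \<Rightarrow> 'a \<times> 'b) \<Rightarrow> (nat set \<Rightarrow> 'c \<times> 'd)"
    and fk :: "nat \<Rightarrow> (nat set \<Rightarrow> 'a \<times> 'b) \<Rightarrow> (nat set \<Rightarrow> 'a \<times> 'b) list \<Rightarrow> (nat set \<Rightarrow> 'c \<times> 'd)"
  assumes R_top: "topring TYPE('r)"
    and R_Q: "\<forall>n::nat. n > 0 \<longrightarrow> (\<exists>u::'r. of_nat n * u = 1)"
    and R_dense_units: "closure {t::'r. is_unit t} = UNIV"
    and R_lkw: "locally_kw (UNIV :: 'r set)"
    and E_mod: "topmod sa" "topmod sb"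
    and F_mod: "topmod sc" "topmod sd"
    and E_lkw: "locally_kw (UNIV :: ('a \<times> 'b) set)"
    and F_lkw: "locally_kw (UNIV :: ('c \<times> 'd) set)"
    and U_open: "dw_open U"
    and f_maps: "\<forall>x\<in>U. f x \<in> sv_even"
    and f_cont: "dw_cont U (\<lambda>x. fst (body x)) (\<lambda>w. fst (body w)) f"
    and f_grounded: "\<forall>e. emb (e, 0) \<in> U \<longrightarrow> (\<exists>c. f (emb (e, 0)) = emb (c, 0))"
    and f_smooth: "smooth_R sa sc {e. emb (e, 0) \<in> U} (\<lambda>e. fst (body (f (emb (e, 0)))))"
    and fk0: "\<forall>x\<in>U. fk 0 x [] = f x"
    and fk_cont: "\<forall>k\<ge>1. dw_cont {(x, vs). x \<in> U \<and> length vs = k \<and> set vs \<subseteq> sv_space}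
                     (\<lambda>(x, vs). (fst (body x), \<lambda>i. if i < k then body (vs ! i) else 0))
                     body (\<lambda>(x, vs). fk k x vs)"
    and fk_ml: "\<forall>k\<ge>1. \<forall>x\<in>U. even_ml_susy sa sb sc sd k (fk k x)"
    and fk_ext: "\<forall>k\<ge>1. \<forall>e vs. emb (e, 0) \<in> U \<and> length vs = k \<longrightarrow>
                   fk k (emb (e, 0)) (map (\<lambda>v. emb (v, 0)) vs) =
                   emb (dk sa sc {e. emb (e, 0) \<in> U} (\<lambda>e. fst (body (f (emb (e, 0))))) k e vs, 0)"
    and fk_step: "\<forall>k p x a vs. x \<in> U \<and> a \<in> sv_even \<and> (\<forall>I. p \<notin> I \<longrightarrow> a I = 0) \<and>
                   length vs = k \<and> set vs \<subseteq> sv_even \<longrightarrow>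
                   fk (Suc k) x (a # vs) = fk k (x + a) vs - fk k x vs"
  shows "\<forall>x\<in>U. \<forall>y\<in>sv_even. body y = 0 \<longrightarrow>
           finite {k. rscale sc sd (rinv (fact k)) (fk k x (replicate k y)) \<noteq> 0} \<and>
           f (x + y) = (\<Sum>k\<in>{k. rscale sc sd (rinv (fact k)) (fk k x (replicate k y)) \<noteq> 0}.
                          rscale sc sd (rinv (fact k)) (fk k x (replicate k y)))"
proof -
  have ms: "module sa" "module sb" "module sc" "module sd"
    using E_mod F_mod by (simp_all add: topmod_def)
  obtain W where W: "U = {x \<in> sv_even. fst (body x) \<in> W}"
    using U_open unfolding dw_open_def by blast
  have Ushift: "x + v \<in> U" if "x \<in> U" "v \<in> sv_even" "body v = 0" for x v
  proof -
    have "x \<in> sv_even" "fst (body x) \<in> W" using that(1) W by auto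
    moreover have "body (x + v) = body x" using that(3) by (simp add: body_def)
    ultimately show ?thesis using W sv_even_add[OF _ that(2)] by auto
  qed
  have rinv_ok: "of_nat n * rinv n = (1::'r)" if npos: "n > 0" for n
  proof -
    obtain u :: 'r where u: "of_nat n * u = 1" using R_Q[rule_format, OF npos] by (elim exE)
    have "(THE u. of_nat n * u = (1::'r)) = u"
    proof (rule the_equality)
      fix v :: 'r assume v: "of_nat n * v = 1"
      have "v = u * (of_nat n * v)" using u by (metis mult.assoc mult.commute mult_1)
      also have "\<dots> = u" using v by simp
      finally show "v = u" .
    qed (rule u)
    then show ?thesis using u by (simp add: rinv_def)
  qed
  have rinv_uniq: "rinv n = (u::'r)" if "n > 0" "of_nat n * u = 1" for n u
  proof -
    have "rinv n = u * (of_nat n * rinv n)" using that(2) by (metis mult.assoc mult.commute mult_1)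
    also have "\<dots> = u" using rinv_ok[OF that(1)] by simp
    finally show ?thesis .
  qed
  have rinv1: "rinv (fact 0) = (1::'r)" by (rule rinv_uniq) simp_all
  have rinvS: "rinv (fact (Suc i)) * of_nat (Suc i) = (rinv (fact i) :: 'r)" for i
  proof -
    have "of_nat (fact i) * (rinv (fact (Suc i)) * of_nat (Suc i)) = (of_nat (fact (Suc i)) * rinv (fact (Suc i)) :: 'r)"
      by (simp add: algebra_simps)
    also have "\<dots> = 1" by (rule rinv_ok) simp
    finally show ?thesis by (intro rinv_uniq[symmetric]) simp_all
  qed
  show ?thesis
  proof (intro ballI impI)
    fix x y :: "nat set \<Rightarrow> 'a \<times> 'b" assume xU: "x \<in> U" and y: "y \<in> sv_even" and by0: "body y = 0"
    define Y where "Y n = (\<lambda>I. if \<exists>q\<in>I. q < n then y I else 0)" for n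
    define A where "A n = (\<lambda>I. if n \<in> I \<and> (\<forall>q\<in>I. n \<le> q) then y I else 0)" for n
    have Yev: "Y n \<in> sv_even" for n unfolding Y_def by (rule sv_even_restrict[OF y])
    have Aev: "A n \<in> sv_even" for n unfolding A_def by (rule sv_even_restrict[OF y])
    have Yb: "body (Y n) = 0" for n by (simp add: Y_def body_def)
    have Ab: "body (A n) = 0" for n by (simp add: A_def body_def)
    have Ap: "\<forall>I. n \<notin> I \<longrightarrow> A n I = 0" for n by (simp add: A_def)
    have Y0: "Y 0 = 0" by (simp add: Y_def fun_eq_iff)
    have YS: "Y (Suc n) = Y n + A n" for n
    proof
      fix I
      have "(\<exists>q\<in>I. q < Suc n) \<longleftrightarrow> (\<exists>q\<in>I. q < n) \<or> (n \<in> I \<and> (\<forall>q\<in>I. n \<le> q))"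
        by (metis less_Suc_eq not_le)
      moreover have "\<not> ((\<exists>q\<in>I. q < n) \<and> (n \<in> I \<and> (\<forall>q\<in>I. n \<le> q)))" using not_le by blast
      ultimately show "Y (Suc n) I = (Y n + A n) I"
        by (auto simp: Y_def A_def)
    qed
    from y have "\<exists>N. \<forall>I. \<not> I \<subseteq> {..<N} \<longrightarrow> y I = 0" by (simp add: sv_even_def sv_space_def)
    then obtain N where N: "\<forall>I. \<not> I \<subseteq> {..<N} \<longrightarrow> y I = 0" by blast
    have YN: "Y N = y"
    proof
      fix I
      show "Y N I = y I"
      proof (cases "\<exists>q\<in>I. q < N")
        case True then show ?thesis by (simp add: Y_def)
      next
        case False
        show ?thesis
        proof (cases "I = {}")
          case True then show ?thesis using by0 False by (simp add: Y_def body_def)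
        next
          case ne: False
          then have "\<not> I \<subseteq> {..<N}" using False by auto
          then show ?thesis using N False by (simp add: Y_def)
        qed
      qed
    qed
    have FB: "fk (k + j) x' (replicate j (z + a) @ vs) = fk (k + j) x' (replicate j z @ vs)
        + rscale sc sd (of_nat j) (fk (k + j) x' (replicate (j - 1) z @ a # vs))"
      if "x' \<in> U" "length vs = k" "set vs \<subseteq> sv_even" "z \<in> sv_even" "a \<in> sv_even" "\<forall>I. p \<notin> I \<longrightarrow> a I = 0"
      for x' k j vs z a p
    proof (cases j)
      case 0 then show ?thesis by (simp add: rscale_zero_left[OF ms(3,4)])
    next
      case (Suc j')
      have E: "even_ml_susy sa sb sc sd (k + j) (fk (k + j) x')" using fk_ml that(1) Suc by simp
      show ?thesis
        by (rule ml_binom[OF ms E that(4,5,6), rule_format]) (use that(2,3) in auto)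
    qed
    have V: "\<forall>(j::nat) k vs x'. x' \<in> U \<and> n < j \<and> length vs = k \<and> set vs \<subseteq> sv_even \<longrightarrow>
        fk (k + j) x' (replicate j (Y n) @ vs) = 0" for n :: nat
    proof (induction n)
      case 0
      show ?case
      proof (intro allI impI, elim conjE)
        fix j k :: nat and vs :: "(nat set \<Rightarrow> 'a \<times> 'b) list" and x' assume x': "x' \<in> U" and j: "0 < j" and l: "length vs = k" and s: "set vs \<subseteq> sv_even"
        have E: "even_ml_susy sa sb sc sd (k + j) (fk (k + j) x')" using fk_ml x' j by simp
        show "fk (k + j) x' (replicate j (Y 0) @ vs) = 0"
          by (rule ml_zero[OF E, of _ 0]) (use l s j Y0 sv_even_zero in \<open>auto simp: sv_even_def nth_append\<close>)
      qed
    next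
      case (Suc n)
      show ?case
      proof (intro allI impI, elim conjE)
        fix j k :: nat and vs :: "(nat set \<Rightarrow> 'a \<times> 'b) list" and x' assume x': "x' \<in> U" and j: "Suc n < j" and l: "length vs = k" and s: "set vs \<subseteq> sv_even"
        have "fk (k + j) x' (replicate j (Y (Suc n)) @ vs) = fk (k + j) x' (replicate j (Y n) @ vs)
          + rscale sc sd (of_nat j) (fk (k + j) x' (replicate (j - 1) (Y n) @ A n # vs))"
          unfolding YS by (rule FB[OF x' l s Yev Aev Ap])
        moreover have "fk (k + j) x' (replicate j (Y n) @ vs) = 0"
          by (rule Suc.IH[rule_format]) (use x' j l s in auto)
        moreover have "fk (Suc k + (j - 1)) x' (replicate (j - 1) (Y n) @ A n # vs) = 0"
          by (rule Suc.IH[rule_format]) (use x' j l s Aev in auto)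
        moreover have "Suc k + (j - 1) = k + j" using j by simp
        ultimately show "fk (k + j) x' (replicate j (Y (Suc n)) @ vs) = 0"
          by (simp add: rscale_zero_right[OF ms(3,4)])
      qed
    qed
    have CC: "\<forall>k vs x'. x' \<in> U \<and> length vs = k \<and> set vs \<subseteq> sv_even \<longrightarrow>
        fk k (x' + Y n) vs = (\<Sum>j\<le>n. rscale sc sd (rinv (fact j)) (fk (k + j) x' (replicate j (Y n) @ vs)))" for n
    proof (induction n)
      case 0
      show ?case using rinv1 by (simp add: Y0 rscale_one[OF ms(3,4)])
    next
      case (Suc n)
      show ?case
      proof (intro allI impI, elim conjE)
        fix k :: nat and vs :: "(nat set \<Rightarrow> 'a \<times> 'b) list" and x'
        assume x': "x' \<in> U" and l: "length vs = k" and s: "set vs \<subseteq> sv_even"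
        define R where "R j w = rscale sc sd (rinv (fact j)) w" for j w
        define P where "P j = fk (k + j) x' (replicate j (Y n) @ vs)" for j
        define Q where "Q j = fk (k + j) x' (replicate (j - 1) (Y n) @ A n # vs)" for j
        have x'': "x' + Y n \<in> U" by (rule Ushift[OF x' Yev Yb])
        have step: "fk (Suc k) (x' + Y n) (A n # vs) = fk k (x' + Y n + A n) vs - fk k (x' + Y n) vs"
          using fk_step x'' Aev Ap[of n] l s by blast
        have "fk k (x' + Y (Suc n)) vs = fk k (x' + Y n) vs + fk (Suc k) (x' + Y n) (A n # vs)"
          using step by (simp add: YS add.assoc)
        also have "\<dots> = (\<Sum>j\<le>n. R j (P j)) + (\<Sum>j\<le>n. R j (fk (Suc k + j) x' (replicate j (Y n) @ A n # vs)))"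
        proof -
          have i1: "fk k (x' + Y n) vs = (\<Sum>j\<le>n. rscale sc sd (rinv (fact j)) (fk (k + j) x' (replicate j (Y n) @ vs)))"
            by (rule Suc.IH[rule_format]) (use x' l s in auto)
          have i2: "fk (Suc k) (x' + Y n) (A n # vs) = (\<Sum>j\<le>n. rscale sc sd (rinv (fact j)) (fk (Suc k + j) x' (replicate j (Y n) @ A n # vs)))"
            by (rule Suc.IH[rule_format]) (use x' l s Aev in auto)
          show ?thesis unfolding i1 i2 R_def P_def ..
        qed
        also have "(\<Sum>j\<le>n. R j (fk (Suc k + j) x' (replicate j (Y n) @ A n # vs))) = (\<Sum>j\<le>Suc n. R j (rscale sc sd (of_nat j) (Q j)))"
        proof -
          have "(\<Sum>j\<le>Suc n. R j (rscale sc sd (of_nat j) (Q j))) = R 0 (rscale sc sd (of_nat 0) (Q 0)) + (\<Sum>i\<le>n. R (Suc i) (rscale sc sd (of_nat (Suc i)) (Q (Suc i))))"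
            by (rule sum.atMost_Suc_shift)
          also have "\<dots> = (\<Sum>i\<le>n. R i (fk (Suc k + i) x' (replicate i (Y n) @ A n # vs)))"
            unfolding R_def Q_def
            by (simp add: rscale_zero_left[OF ms(3,4)] rscale_zero_right[OF ms(3,4)] rscale_scale[OF ms(3,4)] rinvS del: fact_Suc of_nat_Suc)
          finally show ?thesis by simp
        qed
        also have "(\<Sum>j\<le>n. R j (P j)) = (\<Sum>j\<le>Suc n. R j (P j))"
        proof -
          have "P (Suc n) = 0" unfolding P_def by (rule V[rule_format]) (use x' l s in auto)
          then show ?thesis by (simp add: R_def rscale_zero_right[OF ms(3,4)])
        qed
        also have "(\<Sum>j\<le>Suc n. R j (P j)) + (\<Sum>j\<le>Suc n. R j (rscale sc sd (of_nat j) (Q j)))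
            = (\<Sum>j\<le>Suc n. R j (P j + rscale sc sd (of_nat j) (Q j)))"
          by (simp add: sum.distrib R_def rscale_add_right[OF ms(3,4)])
        also have "\<dots> = (\<Sum>j\<le>Suc n. R j (fk (k + j) x' (replicate j (Y (Suc n)) @ vs)))"
          unfolding P_def Q_def YS
          by (intro sum.cong refl arg_cong[where f="R _"] FB[OF x' l s Yev Aev Ap, symmetric])
        finally show "fk k (x' + Y (Suc n)) vs = (\<Sum>j\<le>Suc n. rscale sc sd (rinv (fact j)) (fk (k + j) x' (replicate j (Y (Suc n)) @ vs)))"
          unfolding R_def .
      qed
    qed
    define t where "t k = rscale sc sd (rinv (fact k)) (fk k x (replicate k y))" for k
    have tz: "t k = 0" if "N < k" for k
    proof -
      have "fk (0 + k) x (replicate k (Y N) @ []) = 0" by (rule V[rule_format]) (use xU that in auto)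
      then show ?thesis using YN by (simp add: t_def rscale_zero_right[OF ms(3,4)])
    qed
    have sub: "{k. t k \<noteq> 0} \<subseteq> {..N}" using tz by (auto simp: not_le[symmetric])
    have fin: "finite {k. t k \<noteq> 0}" by (rule finite_subset[OF sub]) simp
    have "f (x + y) = fk 0 (x + y) []" using fk0 Ushift[OF xU y by0] by simp
    also have "\<dots> = (\<Sum>j\<le>N. t j)"
    proof -
      have "fk 0 (x + Y N) [] = (\<Sum>j\<le>N. rscale sc sd (rinv (fact j)) (fk (0 + j) x (replicate j (Y N) @ [])))"
        by (rule CC[rule_format]) (use xU in auto)
      then show ?thesis using YN by (simp add: t_def)
    qed
    also have "\<dots> = (\<Sum>k\<in>{k. t k \<noteq> 0}. t k)"
      by (rule sum.mono_neutral_right) (use sub in auto)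
    finally have "f (x + y) = (\<Sum>k\<in>{k. t k \<noteq> 0}. t k)" .
    then show "finite {k. rscale sc sd (rinv (fact k)) (fk k x (replicate k y)) \<noteq> 0} \<and>
           f (x + y) = (\<Sum>k\<in>{k. rscale sc sd (rinv (fact k)) (fk k x (replicate k y)) \<noteq> 0}.
                          rscale sc sd (rinv (fact k)) (fk k x (replicate k y)))"
      using fin unfolding t_def by simp
  qed
qed

end
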